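(* For any $\mathrm{LP}^{\mathrm{MLN}}$ program $\Pi$, the map \[ \phi(I)=I\cup\{\mathtt{sat}(i,w_i,\mathbf c) : w_i:\mathit{Head}_i(\mathbf c)\leftarrow\mathit{Body}_i(\mathbf c)\in Gr(\Pi),\ I\models \mathit{Body}_i(\mathbf c)\rightarrow \mathit{Head}_i(\mathbf c)\} \] is a one-to-one correspondence between $\mathrm{SM}[\Pi]$ and the set of stable models of $\mathsf{lpmln2asp^{rwd}}(\Pi)$. Furthermore, for every $I\in\mathrm{SM}[\Pi]$, \[ W_\Pi(I)=\exp\Big(\sum_{\mathtt{sat}(i,w_i,\mathbf c)\in\phi(I)} w_i\Big). \] Also, $\phi$ restricts to a one-to-one correspondence between the most probable stable models of $\Pi$ and the optimal stable models of $\mathsf{lpmln2asp^{rwd}}(\Pi)$.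
   Context: An $\mathrm{LP}^{\mathrm{MLN}}$ program is a finite set of weighted rules $w_i:\mathit{Head}_i(\mathbf x)\leftarrow \mathit{Body}_i(\mathbf x)$, indexed by $i$, where $\mathbf x$ is the list of global variables, $\mathit{Head}_i$ is a possibly empty disjunction of atoms, $\mathit{Body}_i$ a conjunction of literals, and $w_i$ is a real number or the symbol $\alpha$ (infinite weight). The Herbrand universe is finite; $Gr(\Pi)$ replaces global variables by all tuples $\mathbf c$ of the universe. For ground $\Pi$ and interpretation $I$: $\overline{\Pi}$ drops weights, $\Pi_I$ is the set of rules satisfied by $I$, $\mathrm{SM}[\Pi]=\{I: I \text{ stable model of }\overline{\Pi_I}\}$, $W_\Pi(I)=\exp(\sum_{w:R\in\Pi_I}w)$ if $I\in\mathrm{SM}[\Pi]$ and $0$ otherwise, $P_\Pi(I)=\lim_{\alpha\to\infty}W_\Pi(I)/\sum_{J\in\mathrm{SM}[\Pi]}W_\Pi(J)$; the most probable stable models are those $I$ maximizing $P_\Pi(I)$ (equivalently, lexicographically maximizing first the number of satisfied hard rules among $I\in\mathrm{SM}[\Pi]$, then the total weight of satisfied soft rules). Weak constraints: a weak constraint is $:\sim F\ [\mathit{Weight}@\mathit{Level}]$ with $F$ a conjunction of literals, $\mathit{Weight}$ real, $\mathit{Level}$ a nonnegative integer (optionally with a tuple of terms distinguishing instances). For $\Pi=\Pi_1\cup\Pi_2$ with $\Pi_1$ weak-constraint-free and $\Pi_2$ ground weak constraints, the stable models of $\Pi$ are those of $\Pi_1$; the penalty of a stable model $I$ at level $l$ is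 $\sum_{:\sim F[w@l]\in\Pi_2,\ I\models F} w$; $I$ is dominated by $I'$ if for some $l$ the penalty of $I'$ at level $l$ is smaller than that of $I$ and the penalties agree at all levels $k>l$; $I$ is optimal if it is not dominated by any stable model. $\mathsf{lpmln2asp^{rwd}}(\Pi)$ replaces each rule $w_i:\mathit{Head}_i(\mathbf x)\leftarrow\mathit{Body}_i(\mathbf x)$ by $\mathtt{sat}(i,w_i,\mathbf x)\leftarrow \mathit{Head}_i(\mathbf x)$; $\mathtt{sat}(i,w_i,\mathbf x)\leftarrow \mathtt{not}\ \mathit{Body}_i(\mathbf x)$; $\mathit{Head}_i(\mathbf x)\leftarrow \mathit{Body}_i(\mathbf x),\ \mathtt{not}\ \mathtt{not}\ \mathtt{sat}(i,w_i,\mathbf x)$; $:\sim \mathtt{sat}(i,w_i,\mathbf x).\ [-w'_i@l, i,\mathbf x]$, where $w'_i=1,\ l=1$ if $w_i=\alpha$, and $w'_i=w_i,\ l=0$ otherwise; $\mathtt{sat}$ is a fresh predicate. In the weight formula, hard weights are kept as the symbol $\alpha$. *)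

theory Defs
  imports Complex_Main
begin

datatype 'a fm = Atom 'a | Bot | Conj "'a fm" "'a fm" | Disj "'a fm" "'a fm" | Impl "'a fm" "'a fm"

fun models :: "'a set \<Rightarrow> 'a fm \<Rightarrow> bool" where
  "models I (Atom a) = (a \<in> I)"
| "models I Bot = False"
| "models I (Conj F G) = (models I F \<and> models I G)"
| "models I (Disj F G) = (models I F \<or> models I G)"
| "models I (Impl F G) = (models I F \<longrightarrow> models I G)"

definition Neg :: "'a fm \<Rightarrow> 'a fm" where "Neg F = Impl F Bot"
definition Top :: "'a fm" where "Top = Neg Bot"

definition big_and :: "'a fm list \<Rightarrow> 'a fm" where "big_and Fs = foldr Conj Fs Top"
definition big_or :: "'a fm list \<Rightarrow> 'a fm" where "big_or Fs = foldr Disj Fs Bot"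

fun reduct :: "'a set \<Rightarrow> 'a fm \<Rightarrow> 'a fm" where
  "reduct I (Atom a) = (if a \<in> I then Atom a else Bot)"
| "reduct I Bot = Bot"
| "reduct I (Conj F G) = (if models I (Conj F G) then Conj (reduct I F) (reduct I G) else Bot)"
| "reduct I (Disj F G) = (if models I (Disj F G) then Disj (reduct I F) (reduct I G) else Bot)"
| "reduct I (Impl F G) = (if models I (Impl F G) then Impl (reduct I F) (reduct I G) else Bot)"

definition stable_model :: "'a fm set \<Rightarrow> 'a set \<Rightarrow> bool" where
  "stable_model \<Pi> I \<longleftrightarrow> (\<forall>F\<in>\<Pi>. models I F) \<and> \<not> (\<exists>J. J \<subset> I \<and> (\<forall>F\<in>\<Pi>. models J (reduct I F)))"

text \<open>A ground weak constraint is (body formula, weight, level, distinguishing term tuple).\<close>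
definition penalty :: "('a fm \<times> real \<times> nat \<times> 't) set \<Rightarrow> 'a set \<Rightarrow> nat \<Rightarrow> real" where
  "penalty WC I l = (\<Sum>(F, w, l', t) \<in> {(F, w, l', t). (F, w, l', t) \<in> WC \<and> l' = l \<and> models I F}. w)"

definition dominated_by :: "('a fm \<times> real \<times> nat \<times> 't) set \<Rightarrow> 'a set \<Rightarrow> 'a set \<Rightarrow> bool" where
  "dominated_by WC I I' \<longleftrightarrow>
     (\<exists>l. penalty WC I' l < penalty WC I l \<and> (\<forall>k>l. penalty WC I' k = penalty WC I k))"

definition optimal_models :: "'a fm set \<Rightarrow> ('a fm \<times> real \<times> nat \<times> 't) set \<Rightarrow> 'a set set" where
  "optimal_models \<Pi> WC = {I. stable_model \<Pi> I \<and> \<not> (\<exists>I'. stable_model \<Pi> I' \<and> dominated_by WC I I')}"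

datatype weight = Soft real | Hard

text \<open>Value of a weight, with the hard weight alpha instantiated by the real number a.\<close>
fun wval :: "real \<Rightarrow> weight \<Rightarrow> real" where
  "wval a (Soft r) = r"
| "wval a Hard = a"

datatype 'a lit = Pos 'a | NegL 'a

fun lit_fm :: "'a lit \<Rightarrow> 'a fm" where
  "lit_fm (Pos a) = Atom a"
| "lit_fm (NegL a) = Neg (Atom a)"

text \<open>A (non-ground) weighted rule: its weight, the number of global variables, and
  for each tuple of constants c the ground head atoms (a disjunction) and body literals (a conjunction).\<close>
record ('a, 'c) lrule =
  wt :: weight
  arity :: nat
  head :: "'c list \<Rightarrow> 'a list"
  body :: "'c list \<Rightarrow> 'a lit list"

type_synonym ('a, 'c) lprog = "('a, 'c) lrule list"

text \<open>Ground instances (i, c) of the program over the Herbrand universe U.\<close>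
definition instances :: "'c set \<Rightarrow> ('a, 'c) lprog \<Rightarrow> (nat \<times> 'c list) set" where
  "instances U P = {(i, c). i < length P \<and> c \<in> lists U \<and> length c = arity (P ! i)}"

definition head_fm :: "('a, 'c) lprog \<Rightarrow> nat \<times> 'c list \<Rightarrow> 'a fm" where
  "head_fm P k = big_or (map Atom (head (P ! fst k) (snd k)))"

definition body_fm :: "('a, 'c) lprog \<Rightarrow> nat \<times> 'c list \<Rightarrow> 'a fm" where
  "body_fm P k = big_and (map lit_fm (body (P ! fst k) (snd k)))"

definition rule_fm :: "('a, 'c) lprog \<Rightarrow> nat \<times> 'c list \<Rightarrow> 'a fm" where
  "rule_fm P k = Impl (body_fm P k) (head_fm P k)"

text \<open>Instances of Gr(P) satisfied by I (this is Pi_I, indexed by instance).\<close>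
definition sat_instances :: "'c set \<Rightarrow> ('a, 'c) lprog \<Rightarrow> 'a set \<Rightarrow> (nat \<times> 'c list) set" where
  "sat_instances U P I = {k \<in> instances U P. models I (rule_fm P k)}"

definition lpmln_SM :: "'c set \<Rightarrow> ('a, 'c) lprog \<Rightarrow> 'a set set" where
  "lpmln_SM U P = {I. stable_model (rule_fm P ` sat_instances U P I) I}"

text \<open>W_Pi(I) as a function of the value a of alpha.\<close>
definition lpmln_W :: "'c set \<Rightarrow> ('a, 'c) lprog \<Rightarrow> real \<Rightarrow> 'a set \<Rightarrow> real" where
  "lpmln_W U P a I =
     (if I \<in> lpmln_SM U P then exp (\<Sum>k\<in>sat_instances U P I. wval a (wt (P ! fst k))) else 0)"

definition lpmln_P :: "'c set \<Rightarrow> ('a, 'c) lprog \<Rightarrow> 'a set \<Rightarrow> real" where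
  "lpmln_P U P I = Lim at_top (\<lambda>a. lpmln_W U P a I / (\<Sum>J\<in>lpmln_SM U P. lpmln_W U P a J))"

definition most_probable :: "'c set \<Rightarrow> ('a, 'c) lprog \<Rightarrow> 'a set set" where
  "most_probable U P = {I \<in> lpmln_SM U P. \<forall>J \<in> lpmln_SM U P. lpmln_P U P J \<le> lpmln_P U P I}"

datatype ('a, 'c) xatom = Orig 'a | Sat nat weight "'c list"

definition sat_atom :: "('a, 'c) lprog \<Rightarrow> nat \<times> 'c list \<Rightarrow> ('a, 'c) xatom" where
  "sat_atom P k = Sat (fst k) (wt (P ! fst k)) (snd k)"

definition rwd_inst_rules :: "('a, 'c) lprog \<Rightarrow> nat \<times> 'c list \<Rightarrow> ('a, 'c) xatom fm set" where
  "rwd_inst_rules P k =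
     { Impl (map_fm Orig (head_fm P k)) (Atom (sat_atom P k)),
       Impl (Neg (map_fm Orig (body_fm P k))) (Atom (sat_atom P k)),
       Impl (Conj (map_fm Orig (body_fm P k)) (Neg (Neg (Atom (sat_atom P k))))) (map_fm Orig (head_fm P k)) }"

definition rwd_rules :: "'c set \<Rightarrow> ('a, 'c) lprog \<Rightarrow> ('a, 'c) xatom fm set" where
  "rwd_rules U P = (\<Union>k\<in>instances U P. rwd_inst_rules P k)"

fun wc_weight :: "weight \<Rightarrow> real" where
  "wc_weight (Soft r) = - r"
| "wc_weight Hard = - 1"

fun wc_level :: "weight \<Rightarrow> nat" where
  "wc_level (Soft r) = 0"
| "wc_level Hard = 1"

text \<open>Weak constraints  :~ sat(i,w_i,c). [-w'_i @ l, i, c].\<close>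
definition rwd_wc :: "'c set \<Rightarrow> ('a, 'c) lprog \<Rightarrow> (('a, 'c) xatom fm \<times> real \<times> nat \<times> (nat \<times> 'c list)) set" where
  "rwd_wc U P = (\<lambda>k. (Atom (sat_atom P k), wc_weight (wt (P ! fst k)), wc_level (wt (P ! fst k)), k))
                   ` instances U P"

definition phi :: "'c set \<Rightarrow> ('a, 'c) lprog \<Rightarrow> 'a set \<Rightarrow> ('a, 'c) xatom set" where
  "phi U P I = Orig ` I \<union> sat_atom P ` sat_instances U P I"

end

theory Submission
  imports Defs "HOL-Real_Asymp.Real_Asymp"
begin


lemma models_Neg[simp]: "models I (Neg F) = (\<not> models I F)" by (simp add: Neg_def)

lemma red_imp_models: "models K (reduct J F) \<Longrightarrow> models J F"
  by (induction F) (auto split: if_splits)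

lemma models_reduct_self: "models J (reduct J F) = models J F"
  by (induction F) auto

lemma models_reduct_agree:
  "(\<forall>a\<in>set_fm F. a \<in> K \<longleftrightarrow> a \<in> J) \<Longrightarrow> models K (reduct J F) = models J F"
  by (induction F) auto

lemma models_map_Orig: "models K (map_fm Orig F) = models (Orig -` K) F"
  by (induction F) auto

lemma reduct_map_Orig: "reduct J (map_fm Orig F) = map_fm Orig (reduct (Orig -` J) F)"
  by (induction F) (auto simp: models_map_Orig)

lemma red_Neg[simp]: "models K (reduct J (Neg F)) = (\<not> models J F)"
  using red_imp_models[of K J F] by (auto simp: Neg_def)

lemma red_Conj: "models K (reduct J (Conj F G)) = (models K (reduct J F) \<and> models K (reduct J G))"
  using red_imp_models[of K J F] red_imp_models[of K J G] by auto

lemma red_Impl: "models J (Impl F G) \<Longrightarrow> models K (reduct J (Impl F G)) = (models K (reduct J F) \<longrightarrow> models K (reduct J G))"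
  by simp

lemma sat_atom_inj: "sat_atom P k = sat_atom P k' \<Longrightarrow> k = k'"
  by (cases k; cases k') (simp add: sat_atom_def)

lemma sat_not_Orig[simp]: "sat_atom P k \<noteq> Orig a" "Orig a \<noteq> sat_atom P k"
  by (simp_all add: sat_atom_def)

lemma phi_Orig[simp]: "Orig -` phi U P I = I"
  by (auto simp: phi_def)

lemma sat_in_phi: "(sat_atom P k \<in> phi U P I) = (k \<in> sat_instances U P I)"
  by (auto simp: phi_def dest: sat_atom_inj)

lemma set_fm_big_or: "set_fm (big_or (map Atom xs)) = set xs"
  by (induction xs) (auto simp: big_or_def)

lemma phi_stable:
  assumes I: "I \<in> lpmln_SM U P"
  shows "stable_model (rwd_rules U P) (phi U P I)"
proof -
  let ?J = "phi U P I"
  have st: "stable_model (rule_fm P ` sat_instances U P I) I" using I by (simp add: lpmln_SM_def)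
  have mod: "\<forall>F\<in>rwd_rules U P. models ?J F"
    unfolding rwd_rules_def rwd_inst_rules_def
    by (auto simp: models_map_Orig sat_in_phi sat_instances_def rule_fm_def)
  have "\<not> (\<exists>K. K \<subset> ?J \<and> (\<forall>F\<in>rwd_rules U P. models K (reduct ?J F)))"
  proof
    assume "\<exists>K. K \<subset> ?J \<and> (\<forall>F\<in>rwd_rules U P. models K (reduct ?J F))"
    then obtain K where KJ: "K \<subset> ?J" and Kred: "\<forall>F\<in>rwd_rules U P. models K (reduct ?J F)" by blast
    have Kr: "\<And>k F. k \<in> instances U P \<Longrightarrow> F \<in> rwd_inst_rules P k \<Longrightarrow> models K (reduct ?J F)"
      using Kred unfolding rwd_rules_def by blast
    let ?I' = "Orig -` K"
    have sub: "?I' \<subseteq> I" using KJ by (auto simp: phi_def)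
    show False
    proof (cases "?I' = I")
      case True
      then obtain x where x: "x \<in> ?J" "x \<notin> K" using KJ by auto
      then obtain k where k: "k \<in> sat_instances U P I" "x = sat_atom P k"
        using True unfolding phi_def by auto
      have kI: "k \<in> instances U P" using k sat_instances_def by auto
      from k have impl: "models I (body_fm P k) \<longrightarrow> models I (head_fm P k)"
        by (simp add: sat_instances_def rule_fm_def)
      have sJ: "sat_atom P k \<in> ?J" using k sat_in_phi by blast
      show False
      proof (cases "models I (head_fm P k)")
        case True
        have "models K (reduct ?J (Impl (map_fm Orig (head_fm P k)) (Atom (sat_atom P k))))"
          by (rule Kr[OF kI]) (simp add: rwd_inst_rules_def)
        then show False using True \<open>?I' = I\<close> sJ x k
          by (simp add: reduct_map_Orig models_map_Orig models_reduct_self)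
      next
        case False
        have "models K (reduct ?J (Impl (Neg (map_fm Orig (body_fm P k))) (Atom (sat_atom P k))))"
          by (rule Kr[OF kI]) (simp add: rwd_inst_rules_def)
        then show False using False impl sJ x k
          by (simp add: models_map_Orig)
      qed
    next
      case False
      then have ss: "?I' \<subset> I" using sub by auto
      have "\<forall>F\<in>rule_fm P ` sat_instances U P I. models ?I' (reduct I F)"
      proof
        fix F assume "F \<in> rule_fm P ` sat_instances U P I"
        then obtain k where k: "k \<in> sat_instances U P I" and F: "F = rule_fm P k" by auto
        have kI: "k \<in> instances U P" using k sat_instances_def by auto
        from k have impl: "models I (body_fm P k) \<longrightarrow> models I (head_fm P k)"
          by (simp add: sat_instances_def rule_fm_def)
        have sJ: "sat_atom P k \<in> ?J" using k sat_in_phi by blast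
        have "models K (reduct ?J (Impl (Conj (map_fm Orig (body_fm P k)) (Neg (Neg (Atom (sat_atom P k))))) (map_fm Orig (head_fm P k))))"
          by (rule Kr[OF kI]) (simp add: rwd_inst_rules_def)
        then show "models ?I' (reduct I F)" using impl sJ F red_imp_models[of ?I' I "body_fm P k"]
          by (simp add: rule_fm_def reduct_map_Orig models_map_Orig red_Conj)
      qed
      then show False using st ss unfolding stable_model_def by blast
    qed
  qed
  then show ?thesis using mod unfolding stable_model_def by blast
qed

lemma rwd_models:
  assumes "\<forall>F\<in>rwd_rules U P. models J F" and k: "k \<in> instances U P"
  shows "(models (Orig -` J) (head_fm P k) \<longrightarrow> sat_atom P k \<in> J)"
    "(\<not> models (Orig -` J) (body_fm P k) \<longrightarrow> sat_atom P k \<in> J)"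
    "(models (Orig -` J) (body_fm P k) \<and> sat_atom P k \<in> J \<longrightarrow> models (Orig -` J) (head_fm P k))"
  using assms unfolding rwd_rules_def rwd_inst_rules_def by (auto simp: models_map_Orig)

lemma set_fm_rwd:
  "F \<in> rwd_inst_rules P k \<Longrightarrow> set_fm F \<subseteq> range Orig \<union> {sat_atom P k}"
  by (auto simp: rwd_inst_rules_def fm.set_map Neg_def)

lemma stable_phi:
  assumes st: "stable_model (rwd_rules U P) J"
  shows "J = phi U P (Orig -` J) \<and> Orig -` J \<in> lpmln_SM U P"
proof -
  let ?I = "Orig -` J"
  have mod: "\<forall>F\<in>rwd_rules U P. models J F" using st unfolding stable_model_def by blast
  have minJ: "\<And>K. K \<subset> J \<Longrightarrow> \<exists>F\<in>rwd_rules U P. \<not> models K (reduct J F)"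
    using st unfolding stable_model_def by blast
  have satJ: "\<And>k. k \<in> instances U P \<Longrightarrow> sat_atom P k \<in> J \<longleftrightarrow> k \<in> sat_instances U P ?I"
    using rwd_models[OF mod] by (auto simp: sat_instances_def rule_fm_def)
  have sub1: "phi U P ?I \<subseteq> J"
    using satJ by (auto simp: phi_def sat_instances_def)
  have eqJ: "J = phi U P ?I"
  proof (rule ccontr)
    assume "J \<noteq> phi U P ?I"
    then have ss: "phi U P ?I \<subset> J" using sub1 by auto
    have "\<forall>F\<in>rwd_rules U P. models (phi U P ?I) (reduct J F)"
    proof
      fix F assume "F \<in> rwd_rules U P"
      then obtain k where k: "k \<in> instances U P" and F: "F \<in> rwd_inst_rules P k"
        unfolding rwd_rules_def by blast
      have "\<forall>a\<in>set_fm F. a \<in> phi U P ?I \<longleftrightarrow> a \<in> J"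
      proof
        fix a assume "a \<in> set_fm F"
        then have "a \<in> range Orig \<or> a = sat_atom P k" using set_fm_rwd[OF F] by blast
        then show "a \<in> phi U P ?I \<longleftrightarrow> a \<in> J"
          using satJ[OF k] sat_in_phi[of P k U ?I] by (auto simp: phi_def)
      qed
      then show "models (phi U P ?I) (reduct J F)"
        using models_reduct_agree mod \<open>F \<in> rwd_rules U P\<close> by blast
    qed
    then show False using minJ[OF ss] by blast
  qed
  have "stable_model (rule_fm P ` sat_instances U P ?I) ?I"
    unfolding stable_model_def
  proof (intro conjI notI)
    show "\<forall>F\<in>rule_fm P ` sat_instances U P ?I. models ?I F"
      by (auto simp: sat_instances_def)
  next
    assume "\<exists>I'. I' \<subset> ?I \<and> (\<forall>F\<in>rule_fm P ` sat_instances U P ?I. models I' (reduct ?I F))"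
    then obtain I' where I': "I' \<subset> ?I" and I'r: "\<forall>F\<in>rule_fm P ` sat_instances U P ?I. models I' (reduct ?I F)"
      by blast
    define K where "K = Orig ` I' \<union> (J - range Orig)"
    have OK: "Orig -` K = I'" by (auto simp: K_def)
    have KJ: "K \<subset> J" using I' by (auto simp: K_def)
    have satK: "\<And>k. sat_atom P k \<in> K \<longleftrightarrow> sat_atom P k \<in> J" by (auto simp: K_def)
    have "\<forall>F\<in>rwd_rules U P. models K (reduct J F)"
    proof
      fix F assume FR: "F \<in> rwd_rules U P"
      then obtain k where k: "k \<in> instances U P" and F: "F \<in> rwd_inst_rules P k"
        unfolding rwd_rules_def by blast
      have r3: "models I' (reduct ?I (body_fm P k)) \<Longrightarrow> sat_atom P k \<in> J \<Longrightarrow> models I' (reduct ?I (head_fm P k))"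
      proof -
        assume b: "models I' (reduct ?I (body_fm P k))" and s: "sat_atom P k \<in> J"
        then have ks: "k \<in> sat_instances U P ?I" using satJ[OF k] by blast
        then have "models I' (reduct ?I (rule_fm P k))" using I'r by blast
        then show ?thesis using b ks by (simp add: rule_fm_def sat_instances_def split: if_splits)
      qed
      have mF: "models J F" using mod FR by blast
      have sKJ: "sat_atom P k \<in> K \<longleftrightarrow> sat_atom P k \<in> J" using satK by blast
      have F3: "F = Impl (map_fm Orig (head_fm P k)) (Atom (sat_atom P k)) \<or>
         F = Impl (Neg (map_fm Orig (body_fm P k))) (Atom (sat_atom P k)) \<or>
         F = Impl (Conj (map_fm Orig (body_fm P k)) (Neg (Neg (Atom (sat_atom P k))))) (map_fm Orig (head_fm P k))"
        using F by (simp add: rwd_inst_rules_def)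
      then show "models K (reduct J F)"
      proof (elim disjE)
        assume Fe: "F = Impl (map_fm Orig (head_fm P k)) (Atom (sat_atom P k))"
        show ?thesis using mF sKJ red_imp_models[of K J "map_fm Orig (head_fm P k)"]
          unfolding Fe red_Impl[OF mF[unfolded Fe]] by simp
      next
        assume Fe: "F = Impl (Neg (map_fm Orig (body_fm P k))) (Atom (sat_atom P k))"
        show ?thesis using mF sKJ
          unfolding Fe red_Impl[OF mF[unfolded Fe]] by simp
      next
        assume Fe: "F = Impl (Conj (map_fm Orig (body_fm P k)) (Neg (Neg (Atom (sat_atom P k))))) (map_fm Orig (head_fm P k))"
        show ?thesis using r3
          unfolding Fe red_Impl[OF mF[unfolded Fe]] red_Conj
          by (simp add: reduct_map_Orig models_map_Orig OK)
      qed
    qed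
    then show False using minJ[OF KJ] by blast
  qed
  then show ?thesis using eqJ by (simp add: lpmln_SM_def)
qed



lemma finite_instances: "finite U \<Longrightarrow> finite (instances U P)"
proof -
  assume U: "finite U"
  have "instances U P \<subseteq> (SIGMA i:{..<length P}. {c. set c \<subseteq> U \<and> length c = arity (P ! i)})"
    by (auto simp: instances_def)
  moreover have "finite (SIGMA i:{..<length P}. {c. set c \<subseteq> U \<and> length c = arity (P ! i)})"
    using U by (intro finite_SigmaI finite_lists_length_eq) auto
  ultimately show ?thesis by (rule finite_subset)
qed

lemma finite_sat_instances: "finite U \<Longrightarrow> finite (sat_instances U P I)"
  using finite_instances[of U P] by (rule finite_subset[rotated]) (auto simp: sat_instances_def)

lemma SM_subset:
  assumes I: "I \<in> lpmln_SM U P"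
  shows "I \<subseteq> (\<Union>k\<in>instances U P. set (head (P ! fst k) (snd k)))"
proof (rule ccontr)
  let ?A = "\<Union>k\<in>instances U P. set (head (P ! fst k) (snd k))"
  assume "\<not> I \<subseteq> ?A"
  then have ss: "I \<inter> ?A \<subset> I" by blast
  have st: "stable_model (rule_fm P ` sat_instances U P I) I" using I by (simp add: lpmln_SM_def)
  have cal: "\<forall>F\<in>rule_fm P ` sat_instances U P I. models (I \<inter> ?A) (reduct I F)"
  proof
    fix F assume "F \<in> rule_fm P ` sat_instances U P I"
    then obtain k where k: "k \<in> sat_instances U P I" and F: "F = rule_fm P k" by blast
    have kI: "k \<in> instances U P" using k by (simp add: sat_instances_def)
    have mI: "models I (rule_fm P k)" using k by (simp add: sat_instances_def)
    have agr: "models (I \<inter> ?A) (reduct I (head_fm P k)) = models I (head_fm P k)"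
    proof (rule models_reduct_agree, intro ballI)
      fix a assume "a \<in> set_fm (head_fm P k)"
      then have "a \<in> set (head (P ! fst k) (snd k))" by (simp add: head_fm_def set_fm_big_or)
      then have "a \<in> ?A" using kI by blast
      then show "a \<in> I \<inter> ?A \<longleftrightarrow> a \<in> I" by blast
    qed
    have hb: "models I (body_fm P k) \<longrightarrow> models I (head_fm P k)" using mI by (simp add: rule_fm_def)
    have "models (I \<inter> ?A) (reduct I (body_fm P k)) \<longrightarrow> models (I \<inter> ?A) (reduct I (head_fm P k))"
      using agr hb red_imp_models[of "I \<inter> ?A" I "body_fm P k"] by blast
    then show "models (I \<inter> ?A) (reduct I F)"
      unfolding F rule_fm_def red_Impl[OF mI[unfolded rule_fm_def]] .
  qed
  have nx: "\<not> (\<exists>J. J \<subset> I \<and> (\<forall>F\<in>rule_fm P ` sat_instances U P I. models J (reduct I F)))"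
    using st unfolding stable_model_def by (rule conjunct2)
  show False using nx ss cal by blast
qed

lemma finite_SM: "finite U \<Longrightarrow> finite (lpmln_SM U P)"
proof -
  assume U: "finite U"
  let ?A = "\<Union>k\<in>instances U P. set (head (P ! fst k) (snd k))"
  have "finite ?A" using finite_instances[OF U] by (intro finite_UN_I) auto
  then have "finite (Pow ?A)" by (rule finite_Pow_iff[THEN iffD2])
  moreover have "lpmln_SM U P \<subseteq> Pow ?A"
  proof
    fix I assume "I \<in> lpmln_SM U P"
    then show "I \<in> Pow ?A" using SM_subset[of I U P] by (simp only: Pow_iff)
  qed
  ultimately show ?thesis by (rule finite_subset[rotated])
qed

lemma phi_inj: "inj_on (phi U P) X"
  proof (rule inj_onI)
  fix x y assume "phi U P x = phi U P y"
  then have "Orig -` phi U P x = Orig -` phi U P y" by simp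
  then show "x = y" by simp
qed

lemma bij1: "bij_betw (phi U P) (lpmln_SM U P) {J. stable_model (rwd_rules U P) J}"
proof -
  have "phi U P ` lpmln_SM U P = {J. stable_model (rwd_rules U P) J}"
  proof
    show "phi U P ` lpmln_SM U P \<subseteq> {J. stable_model (rwd_rules U P) J}"
      using phi_stable by blast
  next
    show "{J. stable_model (rwd_rules U P) J} \<subseteq> phi U P ` lpmln_SM U P"
      using stable_phi by blast
  qed
  then show ?thesis using phi_inj by (simp add: bij_betw_def)
qed

lemma weight_sum:
  assumes U: "finite U"
  shows "(\<Sum>(i, w, c) \<in> {(i, w, c). Sat i w c \<in> phi U P I}. wval a w)
       = (\<Sum>k\<in>sat_instances U P I. wval a (wt (P ! fst k)))"
proof -
  let ?f = "\<lambda>k. (fst k, wt (P ! fst k), snd k)"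
  have eq: "{(i, w, c). Sat i w c \<in> phi U P I} = ?f ` sat_instances U P I"
  proof
    show "{(i, w, c). Sat i w c \<in> phi U P I} \<subseteq> ?f ` sat_instances U P I"
    proof
      fix x assume "x \<in> {(i, w, c). Sat i w c \<in> phi U P I}"
      then obtain i w c where x: "x = (i, w, c)" and m: "Sat i w c \<in> phi U P I" by blast
      then obtain k where k: "k \<in> sat_instances U P I" "Sat i w c = sat_atom P k"
        unfolding phi_def by blast
      then show "x \<in> ?f ` sat_instances U P I" using x by (auto simp: sat_atom_def)
    qed
  next
    show "?f ` sat_instances U P I \<subseteq> {(i, w, c). Sat i w c \<in> phi U P I}"
      using sat_in_phi[of P _ U I] by (auto simp: sat_atom_def)
  qed
  have inj: "inj_on ?f (sat_instances U P I)"
    by (rule inj_onI) (auto simp: prod_eq_iff)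
  show ?thesis unfolding eq sum.reindex[OF inj] by (simp add: case_prod_beta)
qed



lemma exp_neg_lim: "(d::real) < 0 \<Longrightarrow> ((\<lambda>a. exp (a*d + s)) \<longlongrightarrow> 0) at_top"
  by real_asymp

lemma ratio_limit:
  fixes h s :: "'b \<Rightarrow> real"
  assumes M: "finite M" "I \<in> M" and Hm: "Hm = Max (h ` M)"
  shows "((\<lambda>a. exp (a * h I + s I) / (\<Sum>J\<in>M. exp (a * h J + s J))) \<longlongrightarrow>
          (if h I = Hm then exp (s I) else 0) / (\<Sum>J\<in>M. if h J = Hm then exp (s J) else 0)) at_top"
proof -
  have le: "\<And>J. J \<in> M \<Longrightarrow> h J \<le> Hm" using M by (auto simp: Hm)
  have lim1: "((\<lambda>a. exp (a * (h J - Hm) + s J)) \<longlongrightarrow> (if h J = Hm then exp (s J) else 0)) at_top"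
    if J: "J \<in> M" for J
  proof (cases "h J = Hm")
    case True then show ?thesis by simp
  next
    case False
    then have "h J - Hm < 0" using le[OF J] by simp
    from exp_neg_lim[OF this] False show ?thesis by simp
  qed
  obtain J0 where J0: "J0 \<in> M" "h J0 = Hm" using M Hm by (metis Max_in empty_iff finite_imageI image_iff image_is_empty)
  have pos: "(\<Sum>J\<in>M. if h J = Hm then exp (s J) else 0) \<noteq> 0"
  proof -
    have "0 < (\<Sum>J\<in>M. if h J = Hm then exp (s J) else 0)"
      using J0 M by (intro sum_pos2[of M J0]) auto
    then show ?thesis by simp
  qed
  have lim: "((\<lambda>a. exp (a * (h I - Hm) + s I) / (\<Sum>J\<in>M. exp (a * (h J - Hm) + s J))) \<longlongrightarrow>
          (if h I = Hm then exp (s I) else 0) / (\<Sum>J\<in>M. if h J = Hm then exp (s J) else 0)) at_top"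
    by (intro tendsto_divide tendsto_sum lim1 M pos)
  have ex: "\<And>a x y. exp (a * x + y) = exp (a * Hm) * exp (a * (x - Hm) + y)"
    by (simp add: exp_add[symmetric] algebra_simps)
  have eq: "exp (a * h I + s I) / (\<Sum>J\<in>M. exp (a * h J + s J)) =
            exp (a * (h I - Hm) + s I) / (\<Sum>J\<in>M. exp (a * (h J - Hm) + s J))" for a
    by (subst (1 2) ex) (simp add: sum_distrib_left[symmetric])
  show ?thesis using lim by (simp only: eq)
qed

definition hv :: "weight \<Rightarrow> real" where "hv w = (if w = Hard then 1 else 0)"
definition sv :: "weight \<Rightarrow> real" where "sv w = wval 0 w"

lemma wval_split: "wval a w = a * hv w + sv w"
  by (cases w) (auto simp: hv_def sv_def)

definition Hs :: "'c set \<Rightarrow> ('a, 'c) lprog \<Rightarrow> 'a set \<Rightarrow> real" where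
  "Hs U P I = (\<Sum>k\<in>sat_instances U P I. hv (wt (P ! fst k)))"
definition Ss :: "'c set \<Rightarrow> ('a, 'c) lprog \<Rightarrow> 'a set \<Rightarrow> real" where
  "Ss U P I = (\<Sum>k\<in>sat_instances U P I. sv (wt (P ! fst k)))"

lemma W_eq: "I \<in> lpmln_SM U P \<Longrightarrow> lpmln_W U P a I = exp (a * Hs U P I + Ss U P I)"
  by (simp add: lpmln_W_def wval_split sum.distrib sum_distrib_left Hs_def Ss_def)

definition lexmax :: "'c set \<Rightarrow> ('a, 'c) lprog \<Rightarrow> 'a set \<Rightarrow> bool" where
  "lexmax U P I \<longleftrightarrow> (\<forall>J\<in>lpmln_SM U P. \<not> (Hs U P I < Hs U P J \<or> (Hs U P I = Hs U P J \<and> Ss U P I < Ss U P J)))"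

lemma MP_iff:
  assumes U: "finite U" and I: "I \<in> lpmln_SM U P"
  shows "I \<in> most_probable U P \<longleftrightarrow> lexmax U P I"
proof -
  let ?M = "lpmln_SM U P"
  let ?h = "Hs U P" and ?s = "Ss U P"
  define Hm where "Hm = Max (?h ` ?M)"
  define q where "q J = (if ?h J = Hm then exp (?s J) else 0)" for J
  define Z where "Z = (\<Sum>J\<in>?M. q J)"
  have fin: "finite ?M" using finite_SM[OF U] .
  have le: "\<And>J. J \<in> ?M \<Longrightarrow> ?h J \<le> Hm" using fin by (auto simp: Hm_def)
  obtain J0 where J0: "J0 \<in> ?M" "?h J0 = Hm" using fin I unfolding Hm_def
    by (metis Max_in empty_iff finite_imageI image_iff image_is_empty)
  have Zpos: "0 < Z" unfolding Z_def q_def using J0 fin by (intro sum_pos2[of ?M J0]) auto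
  have PJ: "lpmln_P U P J = q J / Z" if J: "J \<in> ?M" for J
  proof -
    have "((\<lambda>a. lpmln_W U P a J / (\<Sum>K\<in>?M. lpmln_W U P a K)) \<longlongrightarrow> q J / Z) at_top"
    proof -
      have e: "(\<lambda>a. lpmln_W U P a J / (\<Sum>K\<in>?M. lpmln_W U P a K)) =
           (\<lambda>a. exp (a * ?h J + ?s J) / (\<Sum>K\<in>?M. exp (a * ?h K + ?s K)))"
        using J by (simp add: W_eq)
      show ?thesis unfolding e q_def Z_def by (rule ratio_limit[OF fin J Hm_def])
    qed
    then show ?thesis unfolding lpmln_P_def by (intro tendsto_Lim) simp_all
  qed
  have "I \<in> most_probable U P \<longleftrightarrow> (\<forall>J\<in>?M. q J \<le> q I)"
    using I Zpos PJ by (auto simp: most_probable_def divide_le_cancel) 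
  also have "\<dots> \<longleftrightarrow> lexmax U P I"
  proof
    assume A: "\<forall>J\<in>?M. q J \<le> q I"
    have "0 < q J0" using J0 by (simp add: q_def)
    then have "0 < q I" using A J0 by force
    then have hI: "?h I = Hm" by (simp add: q_def split: if_splits)
    show "lexmax U P I" unfolding lexmax_def
    proof
      fix J assume J: "J \<in> ?M"
      show "\<not> (?h I < ?h J \<or> (?h I = ?h J \<and> ?s I < ?s J))"
      proof
        assume B: "?h I < ?h J \<or> (?h I = ?h J \<and> ?s I < ?s J)"
        then have hJ: "?h J = Hm" using le[OF J] hI by auto
        then have "?s I < ?s J" using B hI by auto
        moreover have "q J \<le> q I" using A J by blast
        ultimately show False using hI hJ by (simp add: q_def)
      qed
    qed
  next
    assume L: "lexmax U P I"
    have hI: "?h I = Hm" using L J0 le[OF I] unfolding lexmax_def by force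
    show "\<forall>J\<in>?M. q J \<le> q I"
    proof
      fix J assume J: "J \<in> ?M"
      show "q J \<le> q I"
      proof (cases "?h J = Hm")
        case True
        then have "?s J \<le> ?s I" using L J hI unfolding lexmax_def by force
        then show ?thesis using True hI by (simp add: q_def)
      next
        case False then show ?thesis using hI by (simp add: q_def)
      qed
    qed
  qed
  finally show ?thesis .
qed


definition gl :: "nat \<Rightarrow> weight \<Rightarrow> real" where
  "gl l w = (if l = 0 then sv w else if l = 1 then hv w else 0)"

lemma wc_gl: "(if wc_level w = l then wc_weight w else 0) = - gl l w"
  by (cases w) (auto simp: gl_def hv_def sv_def)

lemma penalty_phi:
  assumes U: "finite U"
  shows "penalty (rwd_wc U P) (phi U P I) l = - (\<Sum>k\<in>sat_instances U P I. gl l (wt (P ! fst k)))"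
proof -
  let ?f = "\<lambda>k. (Atom (sat_atom P k), wc_weight (wt (P ! fst k)), wc_level (wt (P ! fst k)), k)"
  let ?S = "{k \<in> sat_instances U P I. wc_level (wt (P ! fst k)) = l}"
  have eq: "{(F, w, l', t). (F, w, l', t) \<in> rwd_wc U P \<and> l' = l \<and> models (phi U P I) F} = ?f ` ?S"
  proof
    show "{(F, w, l', t). (F, w, l', t) \<in> rwd_wc U P \<and> l' = l \<and> models (phi U P I) F} \<subseteq> ?f ` ?S"
    proof
      fix x assume "x \<in> {(F, w, l', t). (F, w, l', t) \<in> rwd_wc U P \<and> l' = l \<and> models (phi U P I) F}"
      then obtain F w l' t where x: "x = (F, w, l', t)" "(F, w, l', t) \<in> rwd_wc U P" "l' = l" "models (phi U P I) F"
        by blast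
      then obtain k where k: "k \<in> instances U P" "(F, w, l', t) = ?f k" unfolding rwd_wc_def by blast
      then have "k \<in> sat_instances U P I" using x sat_in_phi[of P k U I] by simp
      then show "x \<in> ?f ` ?S" using k x by auto
    qed
  next
    show "?f ` ?S \<subseteq> {(F, w, l', t). (F, w, l', t) \<in> rwd_wc U P \<and> l' = l \<and> models (phi U P I) F}"
    proof
      fix x assume "x \<in> ?f ` ?S"
      then obtain k where k: "k \<in> ?S" "x = ?f k" by blast
      then have "k \<in> instances U P" by (simp add: sat_instances_def)
      then show "x \<in> {(F, w, l', t). (F, w, l', t) \<in> rwd_wc U P \<and> l' = l \<and> models (phi U P I) F}"
        using k sat_in_phi[of P k U I] unfolding rwd_wc_def by auto
    qed
  qed
  have inj: "inj_on ?f ?S" by (rule inj_onI) simp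
  have "penalty (rwd_wc U P) (phi U P I) l = (\<Sum>k\<in>?S. wc_weight (wt (P ! fst k)))"
    unfolding penalty_def eq sum.reindex[OF inj] by simp
  also have "\<dots> = (\<Sum>k\<in>sat_instances U P I. if wc_level (wt (P ! fst k)) = l then wc_weight (wt (P ! fst k)) else 0)"
    using finite_sat_instances[OF U] by (rule sum.inter_filter)
  also have "\<dots> = (\<Sum>k\<in>sat_instances U P I. - gl l (wt (P ! fst k)))"
    by (simp only: wc_gl)
  finally show ?thesis by (simp add: sum_negf)
qed

lemma pen0: "finite U \<Longrightarrow> penalty (rwd_wc U P) (phi U P I) 0 = - Ss U P I"
  by (simp add: penalty_phi gl_def Ss_def)
lemma pen1: "finite U \<Longrightarrow> penalty (rwd_wc U P) (phi U P I) 1 = - Hs U P I"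
  by (simp add: penalty_phi gl_def Hs_def)
lemma pen1s: "finite U \<Longrightarrow> penalty (rwd_wc U P) (phi U P I) (Suc 0) = - Hs U P I"
  using pen1[of U P I] by simp
lemma pen2: "finite U \<Longrightarrow> l > 1 \<Longrightarrow> penalty (rwd_wc U P) (phi U P I) l = 0"
  by (simp add: penalty_phi gl_def)

lemma dom_iff:
  assumes U: "finite U"
  shows "dominated_by (rwd_wc U P) (phi U P I) (phi U P J) \<longleftrightarrow>
     (Hs U P I < Hs U P J \<or> (Hs U P I = Hs U P J \<and> Ss U P I < Ss U P J))"
proof
  assume "dominated_by (rwd_wc U P) (phi U P I) (phi U P J)"
  then obtain l where l: "penalty (rwd_wc U P) (phi U P J) l < penalty (rwd_wc U P) (phi U P I) l"
    and k: "\<forall>k>l. penalty (rwd_wc U P) (phi U P J) k = penalty (rwd_wc U P) (phi U P I) k"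
    unfolding dominated_by_def by blast
  consider "l = 0" | "l = 1" | "l > 1" by linarith
  then show "Hs U P I < Hs U P J \<or> (Hs U P I = Hs U P J \<and> Ss U P I < Ss U P J)"
  proof cases
    case 1
    then have e1: "penalty (rwd_wc U P) (phi U P J) 1 = penalty (rwd_wc U P) (phi U P I) 1" using k by simp
    have "Hs U P J = Hs U P I" using e1 unfolding pen1[OF U] by simp
    moreover have "Ss U P I < Ss U P J" using l unfolding 1 pen0[OF U] by simp
    ultimately show ?thesis by simp
  next
    case 2
    have "Hs U P I < Hs U P J" using l unfolding 2 pen1[OF U] by simp
    then show ?thesis by simp
  next
    case 3 then show ?thesis using l by (simp add: pen2[OF U])
  qed
next
  assume A: "Hs U P I < Hs U P J \<or> (Hs U P I = Hs U P J \<and> Ss U P I < Ss U P J)"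
  show "dominated_by (rwd_wc U P) (phi U P I) (phi U P J)"
    unfolding dominated_by_def
  proof (cases "Hs U P I < Hs U P J")
    case True
    show "\<exists>l. penalty (rwd_wc U P) (phi U P J) l < penalty (rwd_wc U P) (phi U P I) l \<and>
        (\<forall>k>l. penalty (rwd_wc U P) (phi U P J) k = penalty (rwd_wc U P) (phi U P I) k)"
      by (rule exI[of _ 1]) (use True in \<open>simp add: pen1[OF U] pen1s[OF U] pen2[OF U]\<close>)
  next
    case False
    then have F: "Hs U P I = Hs U P J" "Ss U P I < Ss U P J" using A by auto
    have "\<forall>k>0. penalty (rwd_wc U P) (phi U P J) k = penalty (rwd_wc U P) (phi U P I) k"
    proof (intro allI impI)
      fix k :: nat assume "k > 0"
      then consider "k = 1" | "k > 1" by linarith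
      then show "penalty (rwd_wc U P) (phi U P J) k = penalty (rwd_wc U P) (phi U P I) k"
        by cases (use F in \<open>simp_all add: pen1[OF U] pen1s[OF U] pen2[OF U]\<close>)
    qed
    then show "\<exists>l. penalty (rwd_wc U P) (phi U P J) l < penalty (rwd_wc U P) (phi U P I) l \<and>
        (\<forall>k>l. penalty (rwd_wc U P) (phi U P J) k = penalty (rwd_wc U P) (phi U P I) k)"
      using F by (intro exI[of _ 0]) (simp add: pen0[OF U])
  qed
qed

lemma opt_iff:
  assumes U: "finite U" and I: "I \<in> lpmln_SM U P"
  shows "phi U P I \<in> optimal_models (rwd_rules U P) (rwd_wc U P) \<longleftrightarrow> lexmax U P I"
proof -
  have "phi U P I \<in> optimal_models (rwd_rules U P) (rwd_wc U P) \<longleftrightarrow>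
        (\<forall>J\<in>lpmln_SM U P. \<not> dominated_by (rwd_wc U P) (phi U P I) (phi U P J))"
  proof
    assume "phi U P I \<in> optimal_models (rwd_rules U P) (rwd_wc U P)"
    then show "\<forall>J\<in>lpmln_SM U P. \<not> dominated_by (rwd_wc U P) (phi U P I) (phi U P J)"
      using phi_stable unfolding optimal_models_def by blast
  next
    assume A: "\<forall>J\<in>lpmln_SM U P. \<not> dominated_by (rwd_wc U P) (phi U P I) (phi U P J)"
    have "\<not> (\<exists>I'. stable_model (rwd_rules U P) I' \<and> dominated_by (rwd_wc U P) (phi U P I) I')"
    proof
      assume "\<exists>I'. stable_model (rwd_rules U P) I' \<and> dominated_by (rwd_wc U P) (phi U P I) I'"
      then obtain I' where "stable_model (rwd_rules U P) I'" "dominated_by (rwd_wc U P) (phi U P I) I'" by blast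
      with stable_phi[OF this(1)] A show False by metis
    qed
    then show "phi U P I \<in> optimal_models (rwd_rules U P) (rwd_wc U P)"
      using phi_stable[OF I] unfolding optimal_models_def by blast
  qed
  then show ?thesis unfolding lexmax_def by (simp add: dom_iff[OF U])
qed

theorem theorem2:
  fixes U :: "'c set" and P :: "('a, 'c) lprog"
  assumes "finite U"
  shows "bij_betw (phi U P) (lpmln_SM U P) {J. stable_model (rwd_rules U P) J}
       \<and> (\<forall>I \<in> lpmln_SM U P. \<forall>a::real.
             lpmln_W U P a I = exp (\<Sum>(i, w, c) \<in> {(i, w, c). Sat i w c \<in> phi U P I}. wval a w))
       \<and> bij_betw (phi U P) (most_probable U P) (optimal_models (rwd_rules U P) (rwd_wc U P))"
proof (intro conjI ballI allI)
  show "bij_betw (phi U P) (lpmln_SM U P) {J. stable_model (rwd_rules U P) J}" by (rule bij1)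
next
  fix I a assume "I \<in> lpmln_SM U P"
  then show "lpmln_W U P a I = exp (\<Sum>(i, w, c) \<in> {(i, w, c). Sat i w c \<in> phi U P I}. wval a w)"
    by (simp add: weight_sum[OF assms] lpmln_W_def)
next
  have MPs: "most_probable U P \<subseteq> lpmln_SM U P" by (auto simp: most_probable_def)
  have "phi U P ` most_probable U P = optimal_models (rwd_rules U P) (rwd_wc U P)"
  proof
    show "phi U P ` most_probable U P \<subseteq> optimal_models (rwd_rules U P) (rwd_wc U P)"
      using MPs MP_iff[OF assms] opt_iff[OF assms] by blast
  next
    show "optimal_models (rwd_rules U P) (rwd_wc U P) \<subseteq> phi U P ` most_probable U P"
    proof
      fix J assume J: "J \<in> optimal_models (rwd_rules U P) (rwd_wc U P)"
      then have "stable_model (rwd_rules U P) J" by (simp add: optimal_models_def)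
      from stable_phi[OF this] have e: "J = phi U P (Orig -` J)" and I: "Orig -` J \<in> lpmln_SM U P" by auto
      have "Orig -` J \<in> most_probable U P"
        using J e I MP_iff[OF assms I] opt_iff[OF assms I] by simp
      then show "J \<in> phi U P ` most_probable U P" using e by blast
    qed
  qed
  then show "bij_betw (phi U P) (most_probable U P) (optimal_models (rwd_rules U P) (rwd_wc U P))"
    using phi_inj by (simp add: bij_betw_def)
qed


end
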